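(* Let $p$ be a prime and $\mathcal H$ a finite relational structure. If $\mathcal H$ is congruence $p$-permutable, then $\mathcal H$ is strongly $p$-rectangular.
   Context: $\langle\mathcal H\rangle_p$ denotes the set of relations $p$-mpp-definable in $\mathcal H$, i.e. definable by formulas $\exists^{\equiv p}\mathbf y_1\cdots\exists^{\equiv p}\mathbf y_s\,\Phi$ with $\Phi$ a conjunction of atomic formulas over relations of $\mathcal H$ and equality, where $\exists^{\equiv p}\mathbf y\,\Psi(\mathbf x,\mathbf y)$ holds for $\mathbf a$ iff the number of $\mathbf b$ with $\Psi(\mathbf a,\mathbf b)$ is not divisible by $p$. For $\mathcal S\in\langle\mathcal H\rangle_p$ ($k$-ary), a $p$-congruence of $\mathcal S$ is a $2k$-ary relation in $\langle\mathcal H\rangle_p$ that is an equivalence relation on $\mathcal S$. For binary relations $\alpha,\beta$, $(\mathbf a,\mathbf b)\in\alpha\circ_p\beta$ iff the number of $\mathbf c$ with $(\mathbf a,\mathbf c)\in\alpha$ and $(\mathbf c,\mathbf b)\in\beta$ is not divisible by $p$. $\mathcal H$ is congruence $p$-permutable if $\alpha\circ_p\beta=\beta\circ_p\alpha$ for all $p$-congruences $\alpha,\beta$ of every $\mathcal S\in\langle\mathcal H\rangle_p$. A relation $\mathcal R$ of arity $n\ge2$ is rectangular if for every nonempty $I\subsetneq[n]$, whenever $(\mathbf a,\mathbf c),(\mathbf a,\mathbf d),(\mathbf b,\mathbf c)\in\mathcal R$ (with $\mathbf a,\mathbf b$ on coordinates $I$, $\mathbf c,\mathbf d$ on $[n]\setminus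 I$) also $(\mathbf b,\mathbf d)\in\mathcal R$. $\mathcal H$ is strongly $p$-rectangular if every relation of arity at least 2 in $\langle\mathcal H\rangle_p$ is rectangular. *)

theory Defs
  imports Main "HOL-Computational_Algebra.Primes"
begin

text \<open>A finite relational structure on the finite type 'a is a finite set H of
  pairs (n, R) where R is an n-ary relation, represented as a set of lists of length n.\<close>

datatype 'a atom = RelA nat "'a list set" "nat list" | EqA nat nat

fun atom_vars :: "'a atom \<Rightarrow> nat list" where
  "atom_vars (RelA n R vs) = vs"
| "atom_vars (EqA u v) = [u, v]"

fun wf_atom :: "(nat \<times> 'a list set) set \<Rightarrow> 'a atom \<Rightarrow> bool" where
  "wf_atom H (RelA n R vs) = ((n, R) \<in> H \<and> length vs = n)"
| "wf_atom H (EqA u v) = True"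

fun holds :: "(nat \<Rightarrow> 'a) \<Rightarrow> 'a atom \<Rightarrow> bool" where
  "holds \<sigma> (RelA n R vs) = (map \<sigma> vs \<in> R)"
| "holds \<sigma> (EqA u v) = (\<sigma> u = \<sigma> v)"

definition upd :: "(nat \<Rightarrow> 'a) \<Rightarrow> nat list \<Rightarrow> 'a list \<Rightarrow> nat \<Rightarrow> 'a" where
  "upd \<sigma> vs bs = fold (\<lambda>(v, b) f. f(v := b)) (zip vs bs) \<sigma>"

text \<open>Semantics of  exists^{=p} ys_1 ... exists^{=p} ys_s. (conjunction of atoms Phi).\<close>
fun sat :: "nat \<Rightarrow> 'a atom list \<Rightarrow> nat list list \<Rightarrow> (nat \<Rightarrow> 'a) \<Rightarrow> bool" where
  "sat p \<Phi> [] \<sigma> = (\<forall>at\<in>set \<Phi>. holds \<sigma> at)"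
| "sat p \<Phi> (ys # Ys) \<sigma> =
     (\<not> p dvd card {b :: 'a list. length b = length ys \<and> sat p \<Phi> Ys (upd \<sigma> ys b)})"

definition mpp_def :: "nat \<Rightarrow> (nat \<times> 'a list set) set \<Rightarrow> nat \<Rightarrow> 'a list set \<Rightarrow> bool" where
  "mpp_def p H k R \<longleftrightarrow>
     (\<exists>xs Ys \<Phi>. length xs = k \<and> distinct (xs @ concat Ys) \<and>
        (\<forall>at\<in>set \<Phi>. wf_atom H at \<and> set (atom_vars at) \<subseteq> set (xs @ concat Ys)) \<and>
        R = {a. length a = k \<and> sat p \<Phi> Ys (upd (\<lambda>_. undefined) xs a)})"

definition pairs :: "nat \<Rightarrow> 'a list set \<Rightarrow> ('a list \<times> 'a list) set" where
  "pairs k \<alpha> = {(a, b). length a = k \<and> length b = k \<and> a @ b \<in> \<alpha>}"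

definition p_congruence ::
  "nat \<Rightarrow> (nat \<times> 'a list set) set \<Rightarrow> nat \<Rightarrow> 'a list set \<Rightarrow> 'a list set \<Rightarrow> bool" where
  "p_congruence p H k S \<alpha> \<longleftrightarrow> mpp_def p H (2 * k) \<alpha> \<and> equiv S (pairs k \<alpha>)"

definition pcomp :: "nat \<Rightarrow> nat \<Rightarrow> ('a list \<times> 'a list) set \<Rightarrow> ('a list \<times> 'a list) set
    \<Rightarrow> ('a list \<times> 'a list) set" where
  "pcomp p k \<alpha> \<beta> = {(a, b). length a = k \<and> length b = k \<and>
      \<not> p dvd card {c :: 'a list. length c = k \<and> (a, c) \<in> \<alpha> \<and> (c, b) \<in> \<beta>}}"

definition cong_p_permutable :: "nat \<Rightarrow> (nat \<times> 'a list set) set \<Rightarrow> bool" where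
  "cong_p_permutable p H \<longleftrightarrow>
     (\<forall>k S \<alpha> \<beta>. mpp_def p H k S \<longrightarrow> p_congruence p H k S \<alpha> \<longrightarrow> p_congruence p H k S \<beta> \<longrightarrow>
        pcomp p k (pairs k \<alpha>) (pairs k \<beta>) = pcomp p k (pairs k \<beta>) (pairs k \<alpha>))"

definition rectangular :: "nat \<Rightarrow> 'a list set \<Rightarrow> bool" where
  "rectangular n R \<longleftrightarrow>
     (\<forall>I. I \<noteq> {} \<and> I \<subset> {0..<n} \<longrightarrow>
        (\<forall>t1\<in>R. \<forall>t2\<in>R. \<forall>t3\<in>R.
           length t1 = n \<and> length t2 = n \<and> length t3 = n \<and>
           (\<forall>i\<in>I. t1 ! i = t2 ! i) \<and> (\<forall>i\<in>{0..<n} - I. t1 ! i = t3 ! i) \<longrightarrow>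
           map (\<lambda>i. if i \<in> I then t3 ! i else t2 ! i) [0..<n] \<in> R))"

definition strongly_p_rectangular :: "nat \<Rightarrow> (nat \<times> 'a list set) set \<Rightarrow> bool" where
  "strongly_p_rectangular p H \<longleftrightarrow>
     (\<forall>n R. 2 \<le> n \<longrightarrow> mpp_def p H n R \<longrightarrow> rectangular n R)"

end

theory Submission
  imports Defs
begin

lemma upd_Cons: "upd \<sigma> (v#vs) (b#bs) = upd (\<sigma>(v:=b)) vs bs"
  by (simp add: upd_def)

lemma upd_notin: "w \<notin> set vs \<Longrightarrow> upd \<sigma> vs bs w = \<sigma> w"
proof (induction vs arbitrary: \<sigma> bs)
  case Nil then show ?case by (simp add: upd_def)
next
  case (Cons v vs) then show ?case by (cases bs) (auto simp: upd_Cons upd_def)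
qed

lemma upd_agree: "(\<sigma> w = \<tau> w \<or> w \<in> set vs) \<Longrightarrow> length bs = length vs \<Longrightarrow> upd \<sigma> vs bs w = upd \<tau> vs bs w"
proof (induction vs arbitrary: \<sigma> \<tau> bs)
  case Nil then show ?case by (simp add: upd_def)
next
  case (Cons v vs)
  then obtain b bs' where bs: "bs = b # bs'" by (cases bs) auto
  have "(\<sigma>(v:=b)) w = (\<tau>(v:=b)) w \<or> w \<in> set vs" using Cons.prems by auto
  then show ?case using Cons bs by (simp add: upd_Cons)
qed

lemma upd_nth: "distinct vs \<Longrightarrow> length bs = length vs \<Longrightarrow> i < length vs \<Longrightarrow> upd \<sigma> vs bs (vs!i) = bs!i"
proof (induction vs arbitrary: \<sigma> bs i)
  case Nil then show ?case by simp
next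
  case (Cons v vs)
  then obtain b bs' where bs: "bs = b # bs'" by (cases bs) auto
  show ?case
  proof (cases i)
    case 0 then show ?thesis using Cons bs by (simp add: upd_Cons upd_notin)
  next
    case (Suc j) then show ?thesis using Cons bs by (simp add: upd_Cons)
  qed
qed

lemma upd_append: "length bs = length vs \<Longrightarrow> upd \<sigma> (vs@ws) (bs@cs) = upd (upd \<sigma> vs bs) ws cs"
  by (simp add: upd_def)

lemma upd_map: "inj f \<Longrightarrow> length bs = length vs \<Longrightarrow> (upd \<sigma> (map f vs) bs) \<circ> f = upd (\<sigma>\<circ>f) vs bs"
proof (induction vs arbitrary: \<sigma> bs)
  case Nil then show ?case by (simp add: upd_def)
next
  case (Cons v vs)
  then obtain b bs' where bs: "bs = b # bs'" by (cases bs) auto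
  have e: "(\<sigma>(f v := b)) \<circ> f = (\<sigma>\<circ>f)(v:=b)" using Cons.prems(1)
    by (auto simp: fun_eq_iff inj_eq)
  have "upd \<sigma> (map f (v#vs)) bs \<circ> f = upd (\<sigma>(f v:=b)) (map f vs) bs' \<circ> f"
    by (simp add: bs upd_Cons)
  also have "\<dots> = upd ((\<sigma>(f v:=b)) \<circ> f) vs bs'" by (rule Cons.IH) (use Cons.prems bs in auto)
  also have "\<dots> = upd (\<sigma>\<circ>f) (v#vs) bs" using e by (simp add: bs upd_Cons)
  finally show ?case .
qed

lemma holds_cong: "(\<forall>w\<in>set (atom_vars at). \<sigma> w = \<tau> w) \<Longrightarrow> holds \<sigma> at = holds \<tau> at"
  by (cases at) (auto intro!: arg_cong[where f="\<lambda>x. x \<in> _"] map_cong)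

lemma sat_cong: "(\<forall>w\<in>V. \<sigma> w = \<tau> w) \<Longrightarrow> (\<forall>at\<in>set \<Phi>. set (atom_vars at) \<subseteq> V \<union> set (concat Ys))
   \<Longrightarrow> sat p \<Phi> Ys \<sigma> = sat p \<Phi> Ys \<tau>"
proof (induction Ys arbitrary: \<sigma> \<tau> V)
  case Nil
  have "\<And>at. at \<in> set \<Phi> \<Longrightarrow> holds \<sigma> at = holds \<tau> at"
  proof -
    fix at assume a: "at \<in> set \<Phi>"
    have "set (atom_vars at) \<subseteq> V" using Nil.prems(2) a by simp
    then show "holds \<sigma> at = holds \<tau> at" using Nil.prems(1) by (intro holds_cong) blast
  qed
  then show ?case by simp
next
  case (Cons ys Ys)
  have "\<And>b. length b = length ys \<Longrightarrow> sat p \<Phi> Ys (upd \<sigma> ys b) = sat p \<Phi> Ys (upd \<tau> ys b)"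
  proof -
    fix b :: "'a list" assume l: "length b = length ys"
    show "sat p \<Phi> Ys (upd \<sigma> ys b) = sat p \<Phi> Ys (upd \<tau> ys b)"
      apply (rule Cons.IH[where V="V \<union> set ys"])
      using Cons.prems l upd_agree apply blast
      using Cons.prems(2) by auto
  qed
  then have "{b. length b = length ys \<and> sat p \<Phi> Ys (upd \<sigma> ys b)} = {b. length b = length ys \<and> sat p \<Phi> Ys (upd \<tau> ys b)}"
    by auto
  then show ?case by simp
qed

lemma card_cond: "(\<And>b. P b = (c \<and> Q b)) \<Longrightarrow>
  (\<not> (p::nat) dvd card {b. L b \<and> P b}) = (c \<and> \<not> p dvd card {b. L b \<and> Q b})"
  by (cases c) auto

lemma card_cond2: "(\<And>b. P b = (Q b \<and> c)) \<Longrightarrow>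
  (\<not> (p::nat) dvd card {b. L b \<and> P b}) = ((\<not> p dvd card {b. L b \<and> Q b}) \<and> c)"
  by (cases c) auto

lemma sat_conj_free:
  "(\<forall>at\<in>set \<Psi>. set (atom_vars at) \<inter> set (concat Ys) = {}) \<Longrightarrow>
   sat p (\<Psi>@\<Phi>) Ys \<sigma> = ((\<forall>at\<in>set \<Psi>. holds \<sigma> at) \<and> sat p \<Phi> Ys \<sigma>)"
proof (induction Ys arbitrary: \<sigma>)
  case Nil then show ?case by auto
next
  case (Cons ys Ys)
  let ?Q = "\<forall>at\<in>set \<Psi>. holds \<sigma> at"
  have h: "\<And>b. (\<forall>at\<in>set \<Psi>. holds (upd \<sigma> ys b) at) = ?Q"
  proof -
    fix b
    have "\<And>at. at \<in> set \<Psi> \<Longrightarrow> holds (upd \<sigma> ys b) at = holds \<sigma> at"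
    proof -
      fix at assume a: "at \<in> set \<Psi>"
      have "\<forall>w\<in>set (atom_vars at). w \<notin> set ys" using Cons.prems a by auto
      then show "holds (upd \<sigma> ys b) at = holds \<sigma> at"
        by (intro holds_cong) (simp add: upd_notin)
    qed
    then show "(\<forall>at\<in>set \<Psi>. holds (upd \<sigma> ys b) at) = ?Q" by auto
  qed
  have "\<And>b. sat p (\<Psi>@\<Phi>) Ys (upd \<sigma> ys b) = (?Q \<and> sat p \<Phi> Ys (upd \<sigma> ys b))"
  proof -
    fix b
    have "sat p (\<Psi>@\<Phi>) Ys (upd \<sigma> ys b) = ((\<forall>at\<in>set \<Psi>. holds (upd \<sigma> ys b) at) \<and> sat p \<Phi> Ys (upd \<sigma> ys b))"
      using Cons.IH Cons.prems by auto
    then show "sat p (\<Psi>@\<Phi>) Ys (upd \<sigma> ys b) = (?Q \<and> sat p \<Phi> Ys (upd \<sigma> ys b))"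
      using h[of b] by simp
  qed
  then show ?case unfolding sat.simps(2) by (rule card_cond)
qed

lemma sat_prod:
  assumes "\<forall>at\<in>set \<Phi>2. set (atom_vars at) \<subseteq> W \<union> set (concat Ys2)"
    and "W \<inter> set (concat Ys1) = {}"
    and "\<forall>at\<in>set \<Phi>1. set (atom_vars at) \<inter> set (concat Ys2) = {}"
  shows "sat p (\<Phi>1@\<Phi>2) (Ys1@Ys2) \<sigma> = (sat p \<Phi>1 Ys1 \<sigma> \<and> sat p \<Phi>2 Ys2 \<sigma>)"
  using assms
proof (induction Ys1 arbitrary: \<sigma>)
  case Nil then show ?case using sat_conj_free by simp
next
  case (Cons ys Ys1)
  let ?Q = "sat p \<Phi>2 Ys2 \<sigma>"
  have h: "\<And>b. sat p \<Phi>2 Ys2 (upd \<sigma> ys b) = ?Q"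
  proof -
    fix b
    show "sat p \<Phi>2 Ys2 (upd \<sigma> ys b) = ?Q"
    proof (rule sat_cong[where V=W])
      show "\<forall>w\<in>W. upd \<sigma> ys b w = \<sigma> w" using Cons.prems(2) by (auto intro!: upd_notin)
    qed (use Cons.prems in auto)
  qed
  have "\<And>b. sat p (\<Phi>1@\<Phi>2) (Ys1@Ys2) (upd \<sigma> ys b) = (sat p \<Phi>1 Ys1 (upd \<sigma> ys b) \<and> ?Q)"
  proof -
    fix b
    have "sat p (\<Phi>1@\<Phi>2) (Ys1@Ys2) (upd \<sigma> ys b) = (sat p \<Phi>1 Ys1 (upd \<sigma> ys b) \<and> sat p \<Phi>2 Ys2 (upd \<sigma> ys b))"
      by (rule Cons.IH) (use Cons.prems in auto)
    then show "sat p (\<Phi>1@\<Phi>2) (Ys1@Ys2) (upd \<sigma> ys b) = (sat p \<Phi>1 Ys1 (upd \<sigma> ys b) \<and> ?Q)"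
      using h[of b] by simp
  qed
  note eq = this
  have "sat p (\<Phi>1@\<Phi>2) ((ys#Ys1)@Ys2) \<sigma> = (\<not> p dvd card {b. length b = length ys \<and> sat p (\<Phi>1@\<Phi>2) (Ys1@Ys2) (upd \<sigma> ys b)})"
    by (simp only: append_Cons sat.simps(2))
  also have "\<dots> = ((\<not> p dvd card {b. length b = length ys \<and> sat p \<Phi>1 Ys1 (upd \<sigma> ys b)}) \<and> ?Q)"
    by (rule card_cond2[of "\<lambda>b. sat p (\<Phi>1@\<Phi>2) (Ys1@Ys2) (upd \<sigma> ys b)" "\<lambda>b. sat p \<Phi>1 Ys1 (upd \<sigma> ys b)" ?Q p "\<lambda>b. length b = length ys", OF eq])
  finally show ?case by (simp only: sat.simps(2))
qed

fun ren :: "(nat \<Rightarrow> nat) \<Rightarrow> 'a atom \<Rightarrow> 'a atom" where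
  "ren f (RelA n R vs) = RelA n R (map f vs)"
| "ren f (EqA u v) = EqA (f u) (f v)"

lemma sat_ren: "inj f \<Longrightarrow> sat p (map (ren f) \<Phi>) (map (map f) Ys) \<sigma> = sat p \<Phi> Ys (\<sigma> \<circ> f)"
proof (induction Ys arbitrary: \<sigma>)
  case Nil
  have "\<And>at. holds \<sigma> (ren f at) = holds (\<lambda>a. \<sigma> (f a)) at" by (case_tac at) (auto simp: o_def)
  then show ?case by (simp add: o_def)
next
  case (Cons ys Ys)
  have "{b. length b = length (map f ys) \<and> sat p (map (ren f) \<Phi>) (map (map f) Ys) (upd \<sigma> (map f ys) b)}
     = {b. length b = length ys \<and> sat p \<Phi> Ys (upd (\<sigma>\<circ>f) ys b)}"
  proof (rule Collect_cong)
    fix b :: "'a list"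
    show "(length b = length (map f ys) \<and> sat p (map (ren f) \<Phi>) (map (map f) Ys) (upd \<sigma> (map f ys) b)) =
      (length b = length ys \<and> sat p \<Phi> Ys (upd (\<sigma>\<circ>f) ys b))"
    proof (cases "length b = length ys")
    case l: True
    have "sat p (map (ren f) \<Phi>) (map (map f) Ys) (upd \<sigma> (map f ys) b) = sat p \<Phi> Ys (upd \<sigma> (map f ys) b \<circ> f)"
      by (rule Cons.IH[OF Cons.prems])
    also have "upd \<sigma> (map f ys) b \<circ> f = upd (\<sigma>\<circ>f) ys b" by (rule upd_map[OF Cons.prems l])
    finally show ?thesis using l by simp
  qed simp
  qed
  then show ?case by (simp only: sat.simps(2) list.map)
qed


lemma ren_vars: "atom_vars (ren f at) = map f (atom_vars at)"
  by (cases at) auto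

lemma ren_wf: "wf_atom H (ren f at) = wf_atom H at"
  by (cases at) auto

lemma mpp_pair:
  fixes H :: "(nat \<times> 'a list set) set"
  assumes "mpp_def p H n R" "\<forall>i\<in>set L. i < n"
  shows "mpp_def p H (2*n) {t @ t' | t t'. t \<in> R \<and> t' \<in> R \<and> (\<forall>i\<in>set L. t!i = t'!i)}"
proof -
  obtain xs Ys \<Phi> where xs: "length xs = n" and dist: "distinct (xs @ concat Ys)"
    and wf: "\<forall>at\<in>set \<Phi>. wf_atom H at \<and> set (atom_vars at) \<subseteq> set (xs @ concat Ys)"
    and R: "R = {a. length a = n \<and> sat p \<Phi> Ys (upd (\<lambda>_. undefined) xs a)}"
    using assms(1) unfolding mpp_def_def by blast
  define N where "N = Suc (Max (set (xs @ concat Ys)))"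
  have ltN: "\<And>v. v \<in> set (xs @ concat Ys) \<Longrightarrow> v < N"
    unfolding N_def by (metis List.finite_set Max_ge le_imp_less_Suc)
  define f where "f = (\<lambda>v::nat. v + N)"
  have inj: "inj f" unfolding f_def by (simp add: inj_def)
  have geN: "\<And>v. f v \<ge> N" unfolding f_def by simp
  define xs' where "xs' = map f xs"
  define Ys' where "Ys' = map (map f) Ys"
  define \<Phi>' where "\<Phi>' = map (ren f) \<Phi>"
  define E :: "'a atom list" where "E = map (\<lambda>i. EqA (xs!i) (xs'!i)) L"
  define u where "u = (\<lambda>_::nat. undefined :: 'a)"
  have cYs': "concat Ys' = map f (concat Ys)" by (simp add: Ys'_def map_concat)
  have d1: "set xs \<inter> set (concat Ys) = {}" "distinct xs" "distinct (concat Ys)" using dist by auto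
  have d2: "set (xs @ concat Ys) \<inter> f ` set (xs @ concat Ys) = {}"
    using ltN geN by (metis disjoint_iff imageE leD)
  have d3: "f ` set xs \<inter> f ` set (concat Ys) = {}" using d1(1) inj by (simp add: image_Int[symmetric])
  have dxs': "distinct xs'" unfolding xs'_def using d1 inj by (simp add: distinct_map inj_on_def inj_def)
  have newdist: "distinct ((xs @ xs') @ concat (Ys @ Ys'))"
    using d1 d2 d3 inj dxs' unfolding xs'_def cYs' concat_append
    apply (auto simp: distinct_map inj_on_def inj_def)
    using d1(1) inj by (auto dest: injD)
  have vPhi': "\<forall>at\<in>set \<Phi>'. set (atom_vars at) \<subseteq> set xs' \<union> set (concat Ys')"
  proof
    fix at assume "at \<in> set \<Phi>'"
    then obtain b where b: "b \<in> set \<Phi>" "at = ren f b" unfolding \<Phi>'_def by auto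
    have "set (atom_vars at) = f ` set (atom_vars b)" using b by (simp add: ren_vars)
    also have "\<dots> \<subseteq> f ` (set xs \<union> set (concat Ys))" using wf b by (intro image_mono) auto
    also have "\<dots> = set xs' \<union> set (concat Ys')" unfolding xs'_def cYs' by auto
    finally show "set (atom_vars at) \<subseteq> set xs' \<union> set (concat Ys')" .
  qed
  have vE: "\<forall>at\<in>set E. set (atom_vars at) \<subseteq> set xs \<union> set xs'"
    using assms(2) xs unfolding E_def xs'_def by auto
  have newwf: "\<forall>at\<in>set ((E@\<Phi>)@\<Phi>'). wf_atom H at \<and> set (atom_vars at) \<subseteq> set ((xs@xs') @ concat (Ys@Ys'))"
  proof -
    have "\<forall>at\<in>set E. wf_atom H at" unfolding E_def by auto
    moreover have "\<forall>at\<in>set \<Phi>'. wf_atom H at" using wf unfolding \<Phi>'_def by (auto simp: ren_wf)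
    ultimately show ?thesis using wf vE vPhi' by auto
  qed
  have xsd: "set xs \<inter> set xs' = {}" using d2 unfolding xs'_def by auto
  have key: "sat p ((E@\<Phi>)@\<Phi>') (Ys@Ys') (upd u (xs@xs') (a@a')) = (a \<in> R \<and> a' \<in> R \<and> (\<forall>i\<in>set L. a!i = a'!i))"
    if la: "length a = n" and la': "length a' = n" for a a'
  proof -
    define \<sigma> where "\<sigma> = upd u (xs@xs') (a@a')"
    have \<sigma>: "\<sigma> = upd (upd u xs a) xs' a'" unfolding \<sigma>_def using la xs by (simp add: upd_append)
    have xs'd: "set xs' \<inter> set (concat Ys) = {}" using d2 unfolding xs'_def by auto
    have s1: "sat p ((E@\<Phi>)@\<Phi>') (Ys@Ys') \<sigma> = (sat p (E@\<Phi>) Ys \<sigma> \<and> sat p \<Phi>' Ys' \<sigma>)"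
    proof (rule sat_prod[where W="set xs'"])
      show "\<forall>at\<in>set \<Phi>'. set (atom_vars at) \<subseteq> set xs' \<union> set (concat Ys')" by (rule vPhi')
      show "set xs' \<inter> set (concat Ys) = {}" by (rule xs'd)
      have "set xs \<inter> set (concat Ys') = {}" "set xs' \<inter> set (concat Ys') = {}" "set (xs @ concat Ys) \<inter> set (concat Ys') = {}"
        using d2 d3 unfolding cYs' xs'_def by auto
      then show "\<forall>at\<in>set (E@\<Phi>). set (atom_vars at) \<inter> set (concat Ys') = {}"
        using vE wf by fastforce
    qed
    have s2: "sat p (E@\<Phi>) Ys \<sigma> = ((\<forall>at\<in>set E. holds \<sigma> at) \<and> sat p \<Phi> Ys \<sigma>)"
      by (rule sat_conj_free) (use vE d1 xs'd in blast)
    have s3: "sat p \<Phi> Ys \<sigma> = sat p \<Phi> Ys (upd u xs a)"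
    proof (rule sat_cong[where V="set xs"])
      show "\<forall>w\<in>set xs. \<sigma> w = upd u xs a w" unfolding \<sigma> using xsd
        by (auto intro!: upd_notin)
    qed (use wf in auto)
    have s4: "sat p \<Phi>' Ys' \<sigma> = sat p \<Phi> Ys (upd u xs a')"
    proof -
      have "sat p \<Phi>' Ys' \<sigma> = sat p \<Phi> Ys (\<sigma> \<circ> f)" unfolding \<Phi>'_def Ys'_def by (rule sat_ren[OF inj])
      also have "\<sigma> \<circ> f = upd (upd u xs a \<circ> f) xs a'" unfolding \<sigma> xs'_def
        by (rule upd_map[OF inj]) (use la' xs in simp)
      also have "sat p \<Phi> Ys (upd (upd u xs a \<circ> f) xs a') = sat p \<Phi> Ys (upd u xs a')"
      proof (rule sat_cong[where V="set xs"])
        show "\<forall>w\<in>set xs. upd (upd u xs a \<circ> f) xs a' w = upd u xs a' w"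
          using la' xs by (auto intro!: upd_agree)
      qed (use wf in auto)
      finally show ?thesis .
    qed
    have s5: "(\<forall>at\<in>set E. holds \<sigma> at) = (\<forall>i\<in>set L. a!i = a'!i)"
    proof -
      have "\<And>i. i \<in> set L \<Longrightarrow> \<sigma> (xs!i) = a!i \<and> \<sigma> (xs'!i) = a'!i"
      proof -
        fix i assume i: "i \<in> set L"
        then have il: "i < n" using assms(2) by auto
        have "\<sigma> (xs'!i) = a'!i" unfolding \<sigma> using dxs' la' xs il
          by (intro upd_nth) (auto simp: xs'_def)
        moreover have "xs!i \<notin> set xs'" using xsd il xs nth_mem[of i xs] by blast
        then have "\<sigma> (xs!i) = upd u xs a (xs!i)" unfolding \<sigma> by (rule upd_notin)
        moreover have "upd u xs a (xs!i) = a!i" using d1 la xs il by (intro upd_nth) auto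
        ultimately show "\<sigma> (xs!i) = a!i \<and> \<sigma> (xs'!i) = a'!i" by simp
      qed
      then show ?thesis unfolding E_def by auto
    qed
    have "sat p ((E@\<Phi>)@\<Phi>') (Ys@Ys') \<sigma> = (a \<in> R \<and> a' \<in> R \<and> (\<forall>i\<in>set L. a!i = a'!i))"
      unfolding s1 s2 s3 s4 s5 using la la' by (simp add: R u_def) blast
    then show ?thesis by (simp add: \<sigma>_def)
  qed
  have "{t @ t' | t t'. t \<in> R \<and> t' \<in> R \<and> (\<forall>i\<in>set L. t!i = t'!i)}
     = {t. length t = 2*n \<and> sat p ((E@\<Phi>)@\<Phi>') (Ys@Ys') (upd u (xs@xs') t)}" (is "?A = ?B")
  proof
    show "?A \<subseteq> ?B"
    proof
      fix t assume "t \<in> ?A"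
      then obtain a a' where t: "t = a @ a'" "a \<in> R" "a' \<in> R" "\<forall>i\<in>set L. a!i = a'!i" by blast
      have "length a = n" "length a' = n" using t R by auto
      then show "t \<in> ?B" using key t by auto
    qed
  next
    show "?B \<subseteq> ?A"
    proof
      fix t assume tB: "t \<in> ?B"
      define a where "a = take n t"
      define a' where "a' = drop n t"
      have l: "length a = n" "length a' = n" using tB by (auto simp: a_def a'_def)
      have t: "t = a @ a'" by (simp add: a_def a'_def)
      then show "t \<in> ?A" using key[OF l] tB by auto
    qed
  qed
  then show ?thesis unfolding mpp_def_def u_def
    using newdist newwf xs
    by (intro exI[of _ "xs@xs'"] exI[of _ "Ys@Ys'"] exI[of _ "(E@\<Phi>)@\<Phi>'"]) (auto simp: xs'_def)
qed


lemma pairs_pairset: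
  assumes "\<forall>t\<in>R. length t = n"
  shows "pairs n {t @ t' | t t'. t \<in> R \<and> t' \<in> R \<and> (\<forall>i\<in>set L. t!i = t'!i)}
       = {(t, t'). t \<in> R \<and> t' \<in> R \<and> (\<forall>i\<in>set L. t!i = t'!i)}"
  unfolding pairs_def using assms by auto

lemma equiv_pairset: "equiv R {(t, t'). t \<in> R \<and> t' \<in> R \<and> (\<forall>i\<in>set L. t!i = (t'::'a list)!i)}"
  unfolding equiv_def refl_on_def sym_def trans_def by auto

theorem lemma6p4:
  fixes p :: nat and H :: "(nat \<times> ('a::finite) list set) set"
  assumes "prime p"
    and "finite H"
    and "\<forall>(n, R)\<in>H. \<forall>t\<in>R. length t = n"
    and "cong_p_permutable p H"
  shows "strongly_p_rectangular p H"
  unfolding strongly_p_rectangular_def rectangular_def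
proof (intro allI impI ballI)
  fix n R I t1 t2 t3
  assume n2: "2 \<le> n" and mR: "mpp_def p H n R" and I: "I \<noteq> {} \<and> I \<subset> {0..<n}"
    and t1: "t1 \<in> R" and t2: "t2 \<in> R" and t3: "t3 \<in> R"
    and h: "length t1 = n \<and> length t2 = n \<and> length t3 = n \<and>
           (\<forall>i\<in>I. t1 ! i = t2 ! i) \<and> (\<forall>i\<in>{0..<n} - I. t1 ! i = t3 ! i)"
  define t where "t = map (\<lambda>i. if i \<in> I then t3 ! i else t2 ! i) [0..<n]"
  define L where "L = filter (\<lambda>i. i \<in> I) [0..<n]"
  define M where "M = filter (\<lambda>i. i \<notin> I) [0..<n]"
  have sL: "set L = I" using I unfolding L_def by auto
  have sM: "set M = {0..<n} - I" unfolding M_def by auto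
  have lenR: "\<forall>t\<in>R. length t = n" using mR unfolding mpp_def_def by auto
  define \<alpha> where "\<alpha> = {t @ t' | t t'. t \<in> R \<and> t' \<in> R \<and> (\<forall>i\<in>set L. t!i = t'!i)}"
  define \<beta> where "\<beta> = {t @ t' | t t'. t \<in> R \<and> t' \<in> R \<and> (\<forall>i\<in>set M. t!i = t'!i)}"
  have pa: "pairs n \<alpha> = {(t, t'). t \<in> R \<and> t' \<in> R \<and> (\<forall>i\<in>I. t!i = t'!i)}"
    unfolding \<alpha>_def unfolding pairs_pairset[OF lenR] unfolding sL by (rule refl)
  have pb: "pairs n \<beta> = {(t, t'). t \<in> R \<and> t' \<in> R \<and> (\<forall>i\<in>{0..<n} - I. t!i = t'!i)}"
    unfolding \<beta>_def unfolding pairs_pairset[OF lenR] unfolding sM by (rule refl)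
  have ca: "p_congruence p H n R \<alpha>"
    unfolding p_congruence_def
  proof
    show "mpp_def p H (2 * n) \<alpha>" unfolding \<alpha>_def by (rule mpp_pair[OF mR]) (auto simp: L_def)
    show "equiv R (pairs n \<alpha>)" unfolding pa using equiv_pairset[of R L] sL by simp
  qed
  have cb: "p_congruence p H n R \<beta>"
    unfolding p_congruence_def
  proof
    show "mpp_def p H (2 * n) \<beta>" unfolding \<beta>_def by (rule mpp_pair[OF mR]) (auto simp: M_def)
    show "equiv R (pairs n \<beta>)" unfolding pb using equiv_pairset[of R M] sM by simp
  qed
  have perm: "pcomp p n (pairs n \<alpha>) (pairs n \<beta>) = pcomp p n (pairs n \<beta>) (pairs n \<alpha>)"
    using assms(4) mR ca cb unfolding cong_p_permutable_def by blast
  have Iin: "\<And>i. i \<in> I \<Longrightarrow> i < n" using I by auto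
  have "{c. length c = n \<and> (t3, c) \<in> pairs n \<beta> \<and> (c, t2) \<in> pairs n \<alpha>} = {t1}"
  proof
    show "{t1} \<subseteq> {c. length c = n \<and> (t3, c) \<in> pairs n \<beta> \<and> (c, t2) \<in> pairs n \<alpha>}"
      using h t1 t2 t3 unfolding pa pb by auto
    show "{c. length c = n \<and> (t3, c) \<in> pairs n \<beta> \<and> (c, t2) \<in> pairs n \<alpha>} \<subseteq> {t1}"
    proof
      fix c assume "c \<in> {c. length c = n \<and> (t3, c) \<in> pairs n \<beta> \<and> (c, t2) \<in> pairs n \<alpha>}"
      then have c: "length c = n" "\<forall>i\<in>{0..<n} - I. t3!i = c!i" "\<forall>i\<in>I. c!i = t2!i"
        unfolding pa pb by auto
      have "c = t1"
      proof (rule nth_equalityI)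
        show "length c = length t1" using c h by simp
        fix i assume "i < length c"
        then show "c!i = t1!i" using c h by (cases "i \<in> I") auto
      qed
      then show "c \<in> {t1}" by simp
    qed
  qed
  then have "(t3, t2) \<in> pcomp p n (pairs n \<beta>) (pairs n \<alpha>)"
    unfolding pcomp_def using h assms(1) by (simp add: prime_nat_iff)
  then have "(t3, t2) \<in> pcomp p n (pairs n \<alpha>) (pairs n \<beta>)" using perm by simp
  then have "\<not> p dvd card {c. length c = n \<and> (t3, c) \<in> pairs n \<alpha> \<and> (c, t2) \<in> pairs n \<beta>}"
    unfolding pcomp_def by simp
  then have "{c. length c = n \<and> (t3, c) \<in> pairs n \<alpha> \<and> (c, t2) \<in> pairs n \<beta>} \<noteq> {}"
    by (intro notI) simp
  then obtain c where c: "length c = n" "(t3, c) \<in> pairs n \<alpha>" "(c, t2) \<in> pairs n \<beta>"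
    by blast
  have cR: "c \<in> R" and c2: "\<forall>i\<in>I. t3!i = c!i" and c3: "\<forall>i\<in>{0..<n} - I. c!i = t2!i"
    using c(2,3) unfolding pa pb by auto
  have "c = t"
  proof (rule nth_equalityI)
    show "length c = length t" using c by (simp add: t_def)
    fix i assume "i < length c"
    then show "c!i = t!i" using c c2 c3 by (cases "i \<in> I") (auto simp: t_def)
  qed
  then show "map (\<lambda>i. if i \<in> I then t3 ! i else t2 ! i) [0..<n] \<in> R" using cR by (simp add: t_def)
qed

end
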